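(* Let $s$ be a Lucasian GNS on a ring $D$. For all positive integers $m$ and $a,b\mid m$ with $a\mid b$ or $b\mid a$, one has $s(m)\equiv\frac m\ell\frac{s(a)s(b)}{s(g)}\bmod s(a)s(b)$, where $g=\gcd(a,b)$ and $\ell=\operatorname{lcm}(a,b)$.
   Context: A GNS over $D$ is $s\colon\mathbf N\to D$ with $s(0)=0$, $s(n)$ a non-zero-divisor for $n>0$, and $s(n-k)\mid s(n)-s(k)$ for $n>k>0$. It is Lucasian if $s(a+b)\equiv s(a)+s(b)\bmod s(a)s(b)$ for all $a,b$. *)

theory Defs
  imports Main
begin

definition non_zero_divisor :: "'a::comm_ring_1 \<Rightarrow> bool" where
  "non_zero_divisor x \<longleftrightarrow> (\<forall>y. x * y = 0 \<longrightarrow> y = 0)"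

definition GNS :: "(nat \<Rightarrow> 'a::comm_ring_1) \<Rightarrow> bool" where
  "GNS s \<longleftrightarrow> s 0 = 0 \<and> (\<forall>n>0. non_zero_divisor (s n)) \<and>
     (\<forall>n k. 0 < k \<and> k < n \<longrightarrow> s (n - k) dvd s n - s k)"

definition cong_D :: "'a::comm_ring_1 \<Rightarrow> 'a \<Rightarrow> 'a \<Rightarrow> bool" where
  "cong_D x y z \<longleftrightarrow> z dvd (x - y)"

definition lucasian :: "(nat \<Rightarrow> 'a::comm_ring_1) \<Rightarrow> bool" where
  "lucasian s \<longleftrightarrow> GNS s \<and> (\<forall>a b. cong_D (s (a + b)) (s a + s b) (s a * s b))"

end

theory Submission
  imports Defs
begin

lemma luc_step:
  assumes "lucasian s"
  shows "s x * s y dvd s (x + y) - s x - s y"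
  using assms unfolding lucasian_def cong_D_def by (simp add: diff_diff_eq)

lemma luc_dvd_mult:
  assumes "lucasian s"
  shows "s a dvd s (j * a)"
proof (induction j)
  case 0
  then show ?case using assms by (simp add: lucasian_def GNS_def)
next
  case (Suc j)
  have "s (j*a) * s a dvd s (j*a + a) - s (j*a) - s a" by (rule luc_step[OF assms])
  hence "s a dvd s (j*a + a) - s (j*a) - s a" using dvd_mult_right by blast
  hence "s a dvd (s (j*a + a) - s (j*a) - s a) + s (j*a) + s a"
    using Suc by (intro dvd_add) (auto intro: dvd_refl)
  thus ?case by (simp add: add.commute)
qed

lemma luc_main:
  assumes "lucasian s" "a dvd b"
  shows "s a * s b dvd s (k * b) - of_nat k * s b"
proof (induction k)
  case 0
  then show ?case using assms by (simp add: lucasian_def GNS_def)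
next
  case (Suc k)
  have h1: "s (k*b) * s b dvd s (k*b + b) - s (k*b) - s b" by (rule luc_step[OF assms(1)])
  obtain t where "b = t * a" using assms(2) by (metis dvdE mult.commute)
  hence "s a dvd s (k*b)" using luc_dvd_mult[OF assms(1), of a "k*t"] by (simp add: mult.assoc)
  hence "s a * s b dvd s (k*b) * s b" by (simp add: mult_dvd_mono)
  hence h2: "s a * s b dvd s (k*b + b) - s (k*b) - s b" using h1 dvd_trans by blast
  have "s a * s b dvd (s (k*b + b) - s (k*b) - s b) + (s (k*b) - of_nat k * s b)"
    using h2 Suc by (rule dvd_add)
  moreover have "(s (k*b + b) - s (k*b) - s b) + (s (k*b) - of_nat k * s b) = s (Suc k * b) - of_nat (Suc k) * s b"
    by (simp add: algebra_simps)
  ultimately show ?case by simp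
qed

lemma cancel_nzd:
  assumes "lucasian s" "0 < a" "s a * c = s a * d"
  shows "c = d"
proof -
  have "non_zero_divisor (s a)" using assms unfolding lucasian_def GNS_def by blast
  moreover have "s a * (c - d) = 0" using assms(3) by (simp add: algebra_simps)
  ultimately show ?thesis unfolding non_zero_divisor_def by auto
qed

lemma half:
  fixes s :: "nat \<Rightarrow> 'a::comm_ring_1"
  assumes "lucasian s" "0 < a" "b dvd m" "a dvd b" "s a * c = s a * s b"
  shows "cong_D (s m) (of_nat (m div b) * c) (s a * s b)"
proof -
  have c: "c = s b" using cancel_nzd[OF assms(1,2,5)] .
  obtain k where m: "m = k * b" using assms(3) by (metis dvdE mult.commute)
  show ?thesis
  proof (cases "b = 0")
    case True
    then show ?thesis using m assms(1) by (simp add: cong_D_def lucasian_def GNS_def)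
  next
    case False
    then have "m div b = k" using m by simp
    then show ?thesis using luc_main[OF assms(1,4), of k] m c by (simp add: cong_D_def)
  qed
qed

theorem corollary5p13:
  fixes s :: "nat \<Rightarrow> 'a::comm_ring_1"
    and m a b :: nat and c :: 'a
  assumes "lucasian s"
    and "0 < m" and "0 < a" and "0 < b"
    and "a dvd m" and "b dvd m"
    and "a dvd b \<or> b dvd a"
    and "s (gcd a b) * c = s a * s b"
  shows "cong_D (s m) (of_nat (m div lcm a b) * c) (s a * s b)"
  using assms(7)
proof
  assume h: "a dvd b"
  hence "gcd a b = a" "lcm a b = b" by (simp_all add: gcd_nat.absorb1 lcm_nat_def assms)
  thus ?thesis using half[OF assms(1,3,6) h] assms(8) by simp
next
  assume h: "b dvd a"
  hence "gcd a b = b" "lcm a b = a" by (simp_all add: gcd_nat.absorb2 lcm_nat_def assms)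
  thus ?thesis using half[OF assms(1,4,5) h, of c] assms(8) by (simp add: mult.commute)
qed

end
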